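(* Let $\kappa>0$ and let $\chi_\kappa$ be the operator on $C^\infty(\mathbb{R})$ given by $$(\chi_\kappa f)(x)=\frac{1}{\Gamma(\kappa)}\int_0^1(1-t)^{\kappa-1}f(tx)\,dt.$$ Then $\chi_\kappa$ is a topological isomorphism from $C^\infty(\mathbb{R})$ onto itself, and its inverse is given for all $f\in C^\infty(\mathbb{R})$ by $$\chi_\kappa^{-1}f(x)=\prod_{j=1}^n\Big(j+x\frac{d}{dx}\Big)\big(I^{\kappa,n-\kappa}f\big)(x),$$ where $n=\lceil\kappa\rceil$ is the smallest integer $\ge\kappa$.
   Context: $C^\infty(\mathbb{R})$ carries the topology defined by the seminorms $\|f\|_{n,a}=\sup_{0\le k\le n,\ x\in[-a,a]}|f^{(k)}(x)|$, $a>0$, $n\in\mathbb{N}$. For $\delta>0$ and $\gamma\in\mathbb{R}$ the Erdélyi–Kober fractional integral is $(I^{\gamma,\delta}f)(x)=\frac{1}{\Gamma(\delta)}\int_0^1(1-t)^{\delta-1}t^\gamma f(tx)\,dt$; for $\delta=0$ (which occurs when $\kappa$ is an integer) $I^{\gamma,0}$ is the identity operator. The product denotes composition of the commuting first-order differential operators $j+x\frac{d}{dx}$. *)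

theory Defs
  imports "HOL-Analysis.Analysis"
begin

definition Cinf :: "(real \<Rightarrow> real) set" where
  "Cinf = {f. \<forall>k x. ((deriv ^^ k) f) differentiable (at x)}"

definition seminorm_na :: "nat \<Rightarrow> real \<Rightarrow> (real \<Rightarrow> real) \<Rightarrow> real" where
  "seminorm_na n a f = Sup {\<bar>(deriv ^^ k) f x\<bar> | k x. k \<le> n \<and> x \<in> {-a..a}}"

definition Ctop :: "(real \<Rightarrow> real) topology" where
  "Ctop = subtopology
     (topology_generated_by
        {{g \<in> Cinf. seminorm_na n a (\<lambda>x. g x - f x) < e} | f n a e.
            f \<in> Cinf \<and> a > 0 \<and> e > 0})
     Cinf"

definition chi :: "real \<Rightarrow> (real \<Rightarrow> real) \<Rightarrow> (real \<Rightarrow> real)" where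
  "chi \<kappa> f = (\<lambda>x. (1 / Gamma \<kappa>) * integral {0..1} (\<lambda>t. (1 - t) powr (\<kappa> - 1) * f (t * x)))"

definition EK :: "real \<Rightarrow> real \<Rightarrow> (real \<Rightarrow> real) \<Rightarrow> (real \<Rightarrow> real)" where
  "EK \<gamma> \<delta> f = (if \<delta> = 0 then f else
     (\<lambda>x. (1 / Gamma \<delta>) * integral {0..1} (\<lambda>t. (1 - t) powr (\<delta> - 1) * t powr \<gamma> * f (t * x))))"

definition Dop :: "nat \<Rightarrow> (real \<Rightarrow> real) \<Rightarrow> (real \<Rightarrow> real)" where
  "Dop j g = (\<lambda>x. real j * g x + x * deriv g x)"

fun Dprod :: "nat \<Rightarrow> (real \<Rightarrow> real) \<Rightarrow> (real \<Rightarrow> real)" where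
  "Dprod 0 g = g"
| "Dprod (Suc n) g = Dop (Suc n) (Dprod n g)"

end

theory Submission
  imports Defs
begin


lemma Cinf_iff: "f \<in> Cinf \<longleftrightarrow> (\<forall>k x. ((deriv ^^ k) f) differentiable (at x))"
  by (simp add: Cinf_def)

lemma Cinf_derivs: assumes "f \<in> Cinf" shows "(deriv ^^ k) f \<in> Cinf"
proof -
  have "(deriv ^^ j) ((deriv ^^ k) f) = (deriv ^^ (j + k)) f" for j
    by (simp add: funpow_add)
  then show ?thesis using assms unfolding Cinf_def by auto
qed

lemma Cinf_deriv: assumes "f \<in> Cinf" shows "deriv f \<in> Cinf"
proof -
  have "(deriv ^^ 1) f \<in> Cinf" by (rule Cinf_derivs[OF assms])
  then show ?thesis by simp
qed

lemma Cinf_differentiable: assumes "f \<in> Cinf" shows "f differentiable (at x)"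
proof -
  have "(deriv ^^ 0) f differentiable (at x)" using assms unfolding Cinf_def by blast
  then show ?thesis by simp
qed

lemma Cinf_DERIV: "f \<in> Cinf \<Longrightarrow> (f has_real_derivative deriv f x) (at x)"
  using Cinf_differentiable DERIV_deriv_iff_real_differentiable by blast

lemma Cinf_cont: "f \<in> Cinf \<Longrightarrow> continuous_on UNIV f"
  by (intro continuous_at_imp_continuous_on ballI differentiable_imp_continuous_within Cinf_differentiable)

lemma Cinf_cont_deriv: "f \<in> Cinf \<Longrightarrow> continuous_on UNIV ((deriv ^^ k) f)"
  using Cinf_cont Cinf_derivs by blast

lemma deriv_lin:
  assumes "f \<in> Cinf" "g \<in> Cinf"
  shows "deriv (\<lambda>x. a * f x + b * g x) = (\<lambda>x. a * deriv f x + b * deriv g x)"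
proof
  fix x
  show "deriv (\<lambda>x. a * f x + b * g x) x = a * deriv f x + b * deriv g x"
    by (intro DERIV_imp_deriv derivative_eq_intros) (auto intro!: Cinf_DERIV assms)
qed

lemma derivs_lin:
  assumes "f \<in> Cinf" "g \<in> Cinf"
  shows "(deriv ^^ k) (\<lambda>x. a * f x + b * g x) = (\<lambda>x. a * (deriv ^^ k) f x + b * (deriv ^^ k) g x)"
  using assms
proof (induction k arbitrary: f g)
  case 0 then show ?case by simp
next
  case (Suc k)
  have "(deriv ^^ Suc k) (\<lambda>x. a * f x + b * g x) = (deriv ^^ k) (deriv (\<lambda>x. a * f x + b * g x))"
    by (simp add: funpow_Suc_right del: funpow.simps)
  also have "\<dots> = (deriv ^^ k) (\<lambda>x. a * deriv f x + b * deriv g x)"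
    using Suc.prems by (simp add: deriv_lin)
  also have "\<dots> = (\<lambda>x. a * (deriv ^^ k) (deriv f) x + b * (deriv ^^ k) (deriv g) x)"
    using Suc by (simp add: Cinf_deriv)
  also have "\<dots> = (\<lambda>x. a * (deriv ^^ Suc k) f x + b * (deriv ^^ Suc k) g x)"
    by (simp add: funpow_Suc_right del: funpow.simps)
  finally show ?case .
qed

lemma Cinf_lin:
  assumes "f \<in> Cinf" "g \<in> Cinf"
  shows "(\<lambda>x. a * f x + b * g x) \<in> Cinf"
  unfolding Cinf_iff derivs_lin[OF assms]
  using assms Cinf_iff by (auto intro!: derivative_intros)

lemma Cinf_diff: "f \<in> Cinf \<Longrightarrow> g \<in> Cinf \<Longrightarrow> (\<lambda>x. f x - g x) \<in> Cinf"
  using Cinf_lin[of f g 1 "-1"] by (simp only: mult_1 mult_minus1 diff_conv_add_uminus)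

lemma Cinf_add: "f \<in> Cinf \<Longrightarrow> g \<in> Cinf \<Longrightarrow> (\<lambda>x. f x + g x) \<in> Cinf"
  using Cinf_lin[of f g 1 1] by (simp only: mult_1)

lemma derivs_diff: "f \<in> Cinf \<Longrightarrow> g \<in> Cinf \<Longrightarrow>
   (deriv ^^ k) (\<lambda>x. f x - g x) = (\<lambda>x. (deriv ^^ k) f x - (deriv ^^ k) g x)"
  using derivs_lin[of f g k 1 "-1"] by simp

lemma derivs_zero: "(deriv ^^ k) (\<lambda>x. 0::real) = (\<lambda>x. 0)"
  by (induction k) auto

lemma Cinf_zero: "(\<lambda>x. 0::real) \<in> Cinf"
  unfolding Cinf_iff derivs_zero by simp

lemma sn_bdd:
  assumes "f \<in> Cinf"
  shows "bdd_above {\<bar>(deriv ^^ k) f x\<bar> | k x. k \<le> n \<and> x \<in> {-a..a}}"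
proof -
  have "{\<bar>(deriv ^^ k) f x\<bar> | k x. k \<le> n \<and> x \<in> {-a..a}} = (\<Union>k\<le>n. (\<lambda>x. \<bar>(deriv ^^ k) f x\<bar>) ` {-a..a})"
    by blast
  moreover have "bdd_above ((\<lambda>x. \<bar>(deriv ^^ k) f x\<bar>) ` {-a..a})" for k
  proof -
    have "compact ((\<lambda>x. \<bar>(deriv ^^ k) f x\<bar>) ` {-a..a})"
      by (intro compact_continuous_image continuous_intros continuous_on_subset[OF Cinf_cont_deriv[OF assms]]) auto
    then show ?thesis by (meson bounded_imp_bdd_above compact_imp_bounded)
  qed
  ultimately show ?thesis by (simp add: bdd_above_UN)
qed

lemma sn_ge:
  assumes "f \<in> Cinf" "k \<le> n" "x \<in> {-a..a}"
  shows "\<bar>(deriv ^^ k) f x\<bar> \<le> seminorm_na n a f"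
  unfolding seminorm_na_def
  by (rule cSup_upper[OF _ sn_bdd[OF assms(1)]]) (use assms in blast)

lemma sn_le:
  assumes "a \<ge> 0" "\<And>k x. k \<le> n \<Longrightarrow> x \<in> {-a..a} \<Longrightarrow> \<bar>(deriv ^^ k) f x\<bar> \<le> B"
  shows "seminorm_na n a f \<le> B"
  unfolding seminorm_na_def
proof (rule cSup_least)
  show "{\<bar>(deriv ^^ k) f x\<bar> | k x. k \<le> n \<and> x \<in> {-a..a}} \<noteq> {}"
    using assms(1) by (auto intro!: exI[of _ 0])
qed (use assms in auto)

lemma sn_nonneg: assumes "f \<in> Cinf" "a \<ge> 0" shows "seminorm_na n a f \<ge> 0"
proof -
  have "\<bar>(deriv ^^ 0) f 0\<bar> \<le> seminorm_na n a f"
    by (rule sn_ge) (use assms in auto)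
  then show ?thesis by linarith
qed

lemma sn_zero: assumes "a \<ge> 0" shows "seminorm_na n a (\<lambda>x. 0) = 0"
proof -
  have "seminorm_na n a (\<lambda>x. 0) \<le> 0"
    by (rule sn_le) (use assms in \<open>simp_all add: derivs_zero\<close>)
  with sn_nonneg[OF Cinf_zero assms, of n] show ?thesis by linarith
qed

lemma sn_tri:
  assumes "f \<in> Cinf" "g \<in> Cinf" "h \<in> Cinf" "a \<ge> 0"
  shows "seminorm_na n a (\<lambda>x. f x - h x) \<le> seminorm_na n a (\<lambda>x. f x - g x) + seminorm_na n a (\<lambda>x. g x - h x)"
proof (rule sn_le[OF assms(4)])
  fix k x assume kx: "k \<le> n" "x \<in> {-a..a}"
  have "\<bar>(deriv ^^ k) (\<lambda>x. f x - h x) x\<bar> \<le> \<bar>(deriv ^^ k) (\<lambda>x. f x - g x) x\<bar> + \<bar>(deriv ^^ k) (\<lambda>x. g x - h x) x\<bar>"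
    using assms by (simp add: derivs_diff)
  also have "\<dots> \<le> seminorm_na n a (\<lambda>x. f x - g x) + seminorm_na n a (\<lambda>x. g x - h x)"
    by (intro add_mono sn_ge Cinf_diff assms kx)
  finally show "\<bar>(deriv ^^ k) (\<lambda>x. f x - h x) x\<bar> \<le> seminorm_na n a (\<lambda>x. f x - g x) + seminorm_na n a (\<lambda>x. g x - h x)" .
qed



definition W :: "(real \<Rightarrow> real) \<Rightarrow> bool" where
  "W w \<longleftrightarrow> w integrable_on {0..1} \<and> (\<forall>t\<in>{0..1}. 0 \<le> w t)"

definition T :: "(real \<Rightarrow> real) \<Rightarrow> (real \<Rightarrow> real) \<Rightarrow> real \<Rightarrow> real" where
  "T w g x = integral {0..1} (\<lambda>t. w t * g (t * x))"

lemma intW: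
  assumes "W w" "continuous_on {0..1} h"
  shows "(\<lambda>t. w t * h t) integrable_on {0..1}"
proof -
  have wa: "w absolutely_integrable_on {0..1}"
    using assms(1) unfolding W_def by (intro nonnegative_absolutely_integrable_1) auto
  have "(\<lambda>t. h t * w t) absolutely_integrable_on {0..1}"
  proof (rule absolutely_integrable_bounded_measurable_product_real[OF _ _ _ wa])
    show "h \<in> borel_measurable (lebesgue_on {0..1})"
      by (rule continuous_imp_measurable_on_sets_lebesgue[OF assms(2)]) auto
    show "bounded (h ` {0..1})"
      by (intro compact_imp_bounded compact_continuous_image assms(2)) auto
  qed auto
  then show ?thesis
    by (simp add: absolutely_integrable_on_def mult.commute)
qed

lemma integral_W_nonneg: "W w \<Longrightarrow> integral {0..1} w \<ge> 0"
  unfolding W_def by (intro integral_nonneg) auto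

lemma boundW:
  assumes "W w" "continuous_on {0..1} h" "\<And>t. t \<in> {0..1} \<Longrightarrow> \<bar>h t\<bar> \<le> B"
  shows "\<bar>integral {0..1} (\<lambda>t. w t * h t)\<bar> \<le> integral {0..1} w * B"
proof -
  have "norm (integral {0..1} (\<lambda>t. w t * h t)) \<le> integral {0..1} (\<lambda>t. w t * B)"
  proof (rule integral_norm_bound_integral)
    show "(\<lambda>t. w t * h t) integrable_on {0..1}" by (rule intW[OF assms(1,2)])
    show "(\<lambda>t. w t * B) integrable_on {0..1}"
      using assms(1) unfolding W_def by (intro integrable_on_mult_left) auto
    fix t :: real assume t: "t \<in> {0..1}"
    have "w t \<ge> 0" using assms(1) t unfolding W_def by auto
    then show "norm (w t * h t) \<le> w t * B"
      using assms(3)[OF t] by (simp add: abs_mult mult_left_mono)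
  qed
  then show ?thesis by simp
qed

lemma cont_scale: fixes g :: "real \<Rightarrow> real" and x :: real assumes "continuous_on UNIV g" shows "continuous_on S (\<lambda>t. g (t * x))"
proof -
  have "continuous_on S (\<lambda>t::real. t * x)" by (intro continuous_on_mult continuous_on_id continuous_on_const)
  then show ?thesis using continuous_on_compose2[of UNIV g S "\<lambda>t. t * x"] assms by auto
qed

lemma intT: "W w \<Longrightarrow> continuous_on UNIV g \<Longrightarrow> (\<lambda>t. w t * g (t * x)) integrable_on {0..1}"
  by (intro intW cont_scale)

lemma W_mult_pow: assumes "W w" shows "W (\<lambda>t. w t * t ^ k)"
proof -
  have "continuous_on {0..1} (\<lambda>t::real. t ^ k)" by (intro continuous_on_power continuous_on_id)
  then show ?thesis using assms intW[of w "\<lambda>t. t ^ k"] unfolding W_def by auto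
qed

lemma W_mult_id: "W w \<Longrightarrow> W (\<lambda>t. w t * t)"
  using W_mult_pow[of w 1] by simp

lemma T_cont:
  assumes "W w" "continuous_on UNIV g"
  shows "isCont (T w g) x"
  unfolding continuous_at_eps_delta
proof (intro allI impI)
  fix e :: real assume e: "e > 0"
  define I where "I = integral {0..1} w"
  have I: "I \<ge> 0" unfolding I_def using integral_W_nonneg[OF assms(1)] .
  define K where "K = {-(\<bar>x\<bar>+1)..\<bar>x\<bar>+1}"
  have "uniformly_continuous_on K g"
    by (rule compact_uniformly_continuous) (auto simp: K_def intro: continuous_on_subset[OF assms(2)])
  then obtain d where d: "d > 0" "\<And>y z. y \<in> K \<Longrightarrow> z \<in> K \<Longrightarrow> dist z y < d \<Longrightarrow> dist (g z) (g y) < e / (I + 1)"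
    unfolding uniformly_continuous_on_def using e I
    by (metis add_nonneg_pos divide_pos_pos zero_less_one)
  show "\<exists>d>0. \<forall>y. dist y x < d \<longrightarrow> dist (T w g y) (T w g x) < e"
  proof (intro exI[of _ "min d 1"] conjI allI impI)
    show "min d 1 > 0" using d by auto
    fix y assume y: "dist y x < min d 1"
    have "T w g y - T w g x = integral {0..1} (\<lambda>t. w t * (g (t * y) - g (t * x)))"
      unfolding T_def
      by (subst integral_diff[symmetric]) (auto intro!: intT assms simp: algebra_simps)
    also have "\<bar>\<dots>\<bar> \<le> integral {0..1} w * (e / (I + 1))"
    proof (rule boundW[OF assms(1)])
      show "continuous_on {0..1} (\<lambda>t. g (t * y) - g (t * x))"
        by (intro continuous_intros cont_scale assms(2))
      fix t :: real assume t: "t \<in> {0..1}"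
      have "\<bar>t * y - t * x\<bar> \<le> \<bar>y - x\<bar>"
        using t by (simp add: abs_mult right_diff_distrib[symmetric] mult_left_le_one_le)
      moreover have "\<bar>t * y\<bar> \<le> \<bar>y\<bar>" "\<bar>t * x\<bar> \<le> \<bar>x\<bar>"
        using t by (auto simp: abs_mult mult_left_le_one_le)
      moreover have "\<bar>y\<bar> \<le> \<bar>x\<bar> + 1" using y by (auto simp: dist_real_def)
      ultimately have "t * x \<in> K" "t * y \<in> K"
        by (auto simp: K_def abs_le_iff)
      moreover have "dist (t * y) (t * x) < d"
        using \<open>\<bar>t * y - t * x\<bar> \<le> \<bar>y - x\<bar>\<close> y by (simp add: dist_real_def)
      ultimately show "\<bar>g (t * y) - g (t * x)\<bar> \<le> e / (I + 1)"
        using d(2)[of "t * x" "t * y"] by (simp add: dist_real_def)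
    qed
    also have "\<dots> < e" using I e by (simp add: I_def[symmetric] field_simps)
    finally show "dist (T w g y) (T w g x) < e" by (simp add: dist_real_def)
  qed
qed



lemma mvt_bound:
  fixes g g' :: "real \<Rightarrow> real"
  assumes der: "\<And>z. (g has_real_derivative g' z) (at z)"
    and b: "\<And>z. \<bar>z - y\<bar> \<le> \<bar>u\<bar> \<Longrightarrow> \<bar>g' z - g' y\<bar> \<le> e"
  shows "\<bar>g (y + u) - g y - u * g' y\<bar> \<le> \<bar>u\<bar> * e"
proof (cases "u = 0")
  case True then show ?thesis by simp
next
  case False
  show ?thesis
  proof (cases "u > 0")
    case True
    obtain z where z: "y < z" "z < y + u" "g (y + u) - g y = (y + u - y) * g' z"
      using MVT2[of y "y + u" g g'] True der by auto
    have "g (y + u) - g y - u * g' y = u * (g' z - g' y)"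
      using z(3) by (simp add: algebra_simps)
    then have "\<bar>g (y + u) - g y - u * g' y\<bar> = \<bar>u\<bar> * \<bar>g' z - g' y\<bar>"
      by (simp add: abs_mult)
    also have "\<dots> \<le> \<bar>u\<bar> * e" using b[of z] z True by (intro mult_left_mono) auto
    finally show ?thesis .
  next
    case False
    with \<open>u \<noteq> 0\<close> have u: "u < 0" by auto
    obtain z where z: "y + u < z" "z < y" "g y - g (y + u) = (y - (y + u)) * g' z"
      using MVT2[of "y + u" y g g'] u der by auto
    have "g (y + u) - g y - u * g' y = u * (g' z - g' y)"
      using z(3) by (simp add: algebra_simps)
    then have "\<bar>g (y + u) - g y - u * g' y\<bar> = \<bar>u\<bar> * \<bar>g' z - g' y\<bar>"
      by (simp add: abs_mult)
    also have "\<dots> \<le> \<bar>u\<bar> * e" using b[of z] z u by (intro mult_left_mono) auto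
    finally show ?thesis .
  qed
qed

definition C1 :: "(real \<Rightarrow> real) \<Rightarrow> bool" where
  "C1 g \<longleftrightarrow> (\<forall>x. g differentiable (at x)) \<and> continuous_on UNIV (deriv g)"

lemma C1_cont: "C1 g \<Longrightarrow> continuous_on UNIV g"
  unfolding C1_def
  by (meson continuous_at_imp_continuous_on differentiable_imp_continuous_within)

lemma C1_DERIV: "C1 g \<Longrightarrow> (g has_real_derivative deriv g x) (at x)"
  unfolding C1_def using DERIV_deriv_iff_real_differentiable by blast

lemma Cinf_C1: "f \<in> Cinf \<Longrightarrow> C1 f"
  unfolding C1_def using Cinf_differentiable Cinf_cont Cinf_deriv by blast

lemma T_DERIV:
  assumes "W w" "C1 g"
  shows "(T w g has_real_derivative T (\<lambda>t. w t * t) (deriv g) x) (at x)"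
  unfolding DERIV_def
proof (rule LIM_I)
  fix r :: real assume r: "r > 0"
  define I where "I = integral {0..1} w"
  have I: "I \<ge> 0" unfolding I_def using integral_W_nonneg[OF assms(1)] .
  define e where "e = r / (I + 1)"
  have e: "e > 0" using r I by (simp add: e_def)
  define K where "K = {-(\<bar>x\<bar>+1)..\<bar>x\<bar>+1}"
  have gc: "continuous_on UNIV g" and dc: "continuous_on UNIV (deriv g)"
    using assms(2) C1_cont C1_def by auto
  have "uniformly_continuous_on K (deriv g)"
    by (rule compact_uniformly_continuous) (auto simp: K_def intro: continuous_on_subset[OF dc])
  then obtain d where d0: "d > 0" and d1: "\<forall>y\<in>K. \<forall>z\<in>K. dist z y < d \<longrightarrow> dist (deriv g z) (deriv g y) < e"
    unfolding uniformly_continuous_on_def using e by blast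
  have d: "d > 0" "\<And>y z. y \<in> K \<Longrightarrow> z \<in> K \<Longrightarrow> dist z y < d \<Longrightarrow> dist (deriv g z) (deriv g y) < e"
    using d0 d1 by auto
  show "\<exists>s>0. \<forall>h. h \<noteq> 0 \<and> norm (h - 0) < s \<longrightarrow>
     norm ((T w g (x + h) - T w g x) / h - T (\<lambda>t. w t * t) (deriv g) x) < r"
  proof (intro exI[of _ "min d 1"] conjI allI impI)
    show "min d 1 > 0" using d by auto
    fix h :: real assume h: "h \<noteq> 0 \<and> norm (h - 0) < min d 1"
    define q where "q t = (g (t * (x + h)) - g (t * x)) / h - t * deriv g (t * x)" for t
    have "(T w g (x + h) - T w g x) / h - T (\<lambda>t. w t * t) (deriv g) x
        = integral {0..1} (\<lambda>t. w t * q t)"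
    proof -
      have "integral {0..1} (\<lambda>t. w t * q t) = integral {0..1} (\<lambda>t. (w t * g (t * (x + h)) - w t * g (t * x)) / h - w t * t * deriv g (t * x))"
        using h by (intro integral_cong) (simp add: q_def algebra_simps diff_divide_distrib)
      also have "\<dots> = integral {0..1} (\<lambda>t. (w t * g (t * (x + h)) - w t * g (t * x)) / h) - integral {0..1} (\<lambda>t. w t * t * deriv g (t * x))"
        by (intro integral_diff integrable_on_divide integrable_diff intT assms gc
              intT[OF W_mult_id[OF assms(1)] dc])
      also have "integral {0..1} (\<lambda>t. (w t * g (t * (x + h)) - w t * g (t * x)) / h) = (T w g (x + h) - T w g x) / h"
        unfolding T_def integral_divide
        by (subst integral_diff) (auto intro!: intT assms gc)
      finally show ?thesis by (simp add: T_def)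
    qed
    also have "norm \<dots> \<le> I * e"
      unfolding I_def real_norm_def
    proof (rule boundW[OF assms(1)])
      have c1: "continuous_on {0..1} (\<lambda>t. g (t * (x + h)))" by (rule cont_scale[OF gc])
      have c2: "continuous_on {0..1} (\<lambda>t. g (t * x))" by (rule cont_scale[OF gc])
      have c3: "continuous_on {0..1} (\<lambda>t. deriv g (t * x))" by (rule cont_scale[OF dc])
      have c4: "continuous_on {0..1} (\<lambda>t. (g (t * (x + h)) - g (t * x)) / h)"
        by (intro continuous_on_divide continuous_on_diff c1 c2 continuous_on_const) (use h in auto)
      show "continuous_on {0..1} q"
        unfolding q_def by (intro continuous_on_diff c4 continuous_on_mult continuous_on_id c3)
      fix t :: real assume t: "t \<in> {0..1}"
      have "\<bar>g (t * x + t * h) - g (t * x) - (t * h) * deriv g (t * x)\<bar> \<le> \<bar>t * h\<bar> * e"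
      proof (rule mvt_bound)
        show "(g has_real_derivative deriv g z) (at z)" for z by (rule C1_DERIV[OF assms(2)])
        fix z assume z: "\<bar>z - t * x\<bar> \<le> \<bar>t * h\<bar>"
        have th: "\<bar>t * h\<bar> \<le> \<bar>h\<bar>" "\<bar>t * x\<bar> \<le> \<bar>x\<bar>"
          using t by (auto simp: abs_mult mult_left_le_one_le)
        have hb: "\<bar>h\<bar> < d" "\<bar>h\<bar> < 1" using h by auto
        have zb: "\<bar>z\<bar> \<le> \<bar>x\<bar> + 1" using z th hb by linarith
        have "z \<in> K" using zb unfolding K_def by (simp add: abs_le_iff)
        moreover have "t * x \<in> K" using th unfolding K_def by (simp add: abs_le_iff)
        moreover have "dist z (t * x) < d" using z th hb unfolding dist_real_def by linarith
        ultimately have "dist (deriv g z) (deriv g (t * x)) < e"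
          using d(2)[of "t * x" z] by blast
        then show "\<bar>deriv g z - deriv g (t * x)\<bar> \<le> e"
          by (simp add: dist_real_def)
      qed
      moreover have "q t * h = g (t * x + t * h) - g (t * x) - (t * h) * deriv g (t * x)"
      proof -
        have hne: "h \<noteq> 0" using h by auto
        have "q t * h = (g (t * (x + h)) - g (t * x)) / h * h - t * deriv g (t * x) * h"
          unfolding q_def by (simp only: left_diff_distrib)
        also have "(g (t * (x + h)) - g (t * x)) / h * h = g (t * (x + h)) - g (t * x)"
          using hne by simp
        also have "t * (x + h) = t * x + t * h" by (simp add: distrib_left)
        finally show ?thesis by (simp add: mult_ac)
      qed
      ultimately have "\<bar>q t\<bar> * \<bar>h\<bar> \<le> \<bar>t\<bar> * e * \<bar>h\<bar>"
        by (simp add: abs_mult[symmetric] mult_ac)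
      then have "\<bar>q t\<bar> \<le> \<bar>t\<bar> * e" using h by simp
      also have "\<dots> \<le> e" using t e by (simp add: mult_left_le_one_le)
      finally show "\<bar>q t\<bar> \<le> e" .
    qed
    also have "\<dots> < r" using I r by (simp add: e_def field_simps)
    finally show "norm ((T w g (x + h) - T w g x) / h - T (\<lambda>t. w t * t) (deriv g) x) < r" .
  qed
qed

lemma T_deriv: "W w \<Longrightarrow> C1 g \<Longrightarrow> deriv (T w g) = T (\<lambda>t. w t * t) (deriv g)"
  using T_DERIV DERIV_imp_deriv by blast

lemma T_differentiable: "W w \<Longrightarrow> C1 g \<Longrightarrow> T w g differentiable (at x)"
  using T_DERIV real_differentiable_def by blast



lemma C1_derivs: "f \<in> Cinf \<Longrightarrow> C1 ((deriv ^^ k) f)"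
  by (intro Cinf_C1 Cinf_derivs)

lemma T_derivs:
  assumes "W w" "f \<in> Cinf"
  shows "(deriv ^^ k) (T w f) = T (\<lambda>t. w t * t ^ k) ((deriv ^^ k) f)"
  using assms
proof (induction k arbitrary: w f)
  case 0 then show ?case by simp
next
  case (Suc k)
  have "(deriv ^^ Suc k) (T w f) = (deriv ^^ k) (deriv (T w f))"
    by (simp add: funpow_Suc_right del: funpow.simps)
  also have "deriv (T w f) = T (\<lambda>t. w t * t) (deriv f)"
    by (rule T_deriv[OF Suc.prems(1) Cinf_C1[OF Suc.prems(2)]])
  also have "(deriv ^^ k) (T (\<lambda>t. w t * t) (deriv f)) = T (\<lambda>t. (w t * t) * t ^ k) ((deriv ^^ k) (deriv f))"
    using Suc.IH[OF W_mult_id[OF Suc.prems(1)] Cinf_deriv[OF Suc.prems(2)]] .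
  also have "(\<lambda>t. (w t * t) * t ^ k) = (\<lambda>t. w t * t ^ Suc k)"
    by (simp add: mult_ac)
  also have "(deriv ^^ k) (deriv f) = (deriv ^^ Suc k) f"
    by (simp add: funpow_Suc_right del: funpow.simps)
  finally show ?case .
qed

lemma T_Cinf:
  assumes "W w" "f \<in> Cinf"
  shows "T w f \<in> Cinf"
  unfolding Cinf_iff
proof (intro allI)
  fix k x
  show "(deriv ^^ k) (T w f) differentiable at x"
    unfolding T_derivs[OF assms]
    by (rule T_differentiable[OF W_mult_pow[OF assms(1)] C1_derivs[OF assms(2)]])
qed

lemma T_sn:
  assumes "W w" "f \<in> Cinf" "a \<ge> 0"
  shows "seminorm_na n a (T w f) \<le> integral {0..1} w * seminorm_na n a f"
proof (rule sn_le[OF assms(3)])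
  fix k x assume kx: "k \<le> n" "x \<in> {-a..a}"
  define F where "F = (deriv ^^ k) f"
  have Fc: "continuous_on UNIV F" unfolding F_def by (rule Cinf_cont_deriv[OF assms(2)])
  have "(deriv ^^ k) (T w f) x = integral {0..1} (\<lambda>t. w t * (t ^ k * F (t * x)))"
    unfolding T_derivs[OF assms(1,2)] T_def F_def by (simp add: mult.assoc)
  also have "\<bar>\<dots>\<bar> \<le> integral {0..1} w * seminorm_na n a f"
  proof (rule boundW[OF assms(1)])
    show "continuous_on {0..1} (\<lambda>t. t ^ k * F (t * x))"
      by (intro continuous_on_mult continuous_on_power continuous_on_id cont_scale Fc)
    fix t :: real assume t: "t \<in> {0..1}"
    have "\<bar>t ^ k\<bar> \<le> 1" using t by (simp add: abs_le_iff power_le_one)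
    moreover have "t * x \<in> {-a..a}"
    proof -
      have "\<bar>t * x\<bar> \<le> \<bar>x\<bar>" using t by (simp add: abs_mult mult_left_le_one_le)
      moreover have "\<bar>x\<bar> \<le> a" using kx(2) by auto
      ultimately have "\<bar>t * x\<bar> \<le> a" by linarith
      then show ?thesis by (auto simp: abs_le_iff)
    qed
    then have "\<bar>F (t * x)\<bar> \<le> seminorm_na n a f"
      unfolding F_def by (rule sn_ge[OF assms(2) kx(1)])
    ultimately have "\<bar>t ^ k\<bar> * \<bar>F (t * x)\<bar> \<le> 1 * seminorm_na n a f"
      by (intro mult_mono) auto
    then show "\<bar>t ^ k * F (t * x)\<bar> \<le> seminorm_na n a f" by (simp add: abs_mult)
  qed
  finally show "\<bar>(deriv ^^ k) (T w f) x\<bar> \<le> integral {0..1} w * seminorm_na n a f" .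
qed

lemma T_diff:
  assumes "W w" "continuous_on UNIV f" "continuous_on UNIV g"
  shows "T w (\<lambda>x. f x - g x) = (\<lambda>x. T w f x - T w g x)"
proof
  fix x
  have "T w (\<lambda>x. f x - g x) x = integral {0..1} (\<lambda>t. w t * f (t * x) - w t * g (t * x))"
    unfolding T_def by (simp add: right_diff_distrib)
  also have "\<dots> = T w f x - T w g x"
    unfolding T_def by (rule integral_diff[OF intT[OF assms(1,2)] intT[OF assms(1,3)]])
  finally show "T w (\<lambda>x. f x - g x) x = T w f x - T w g x" .
qed

lemma T_add:
  assumes "W w" "continuous_on UNIV f" "continuous_on UNIV g"
  shows "T w (\<lambda>x. f x + g x) = (\<lambda>x. T w f x + T w g x)"
proof
  fix x
  have "T w (\<lambda>x. f x + g x) x = integral {0..1} (\<lambda>t. w t * f (t * x) + w t * g (t * x))"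
    unfolding T_def by (simp add: distrib_left)
  also have "\<dots> = T w f x + T w g x"
    unfolding T_def by (rule integral_add[OF intT[OF assms(1,2)] intT[OF assms(1,3)]])
  finally show "T w (\<lambda>x. f x + g x) x = T w f x + T w g x" .
qed

lemma T_cmult: "T w (\<lambda>x. c * f x) = (\<lambda>x. c * T w f x)"
proof
  fix x
  have "T w (\<lambda>x. c * f x) x = integral {0..1} (\<lambda>t. c * (w t * f (t * x)))"
    unfolding T_def by (simp add: mult_ac)
  then show "T w (\<lambda>x. c * f x) x = c * T w f x"
    unfolding T_def by simp
qed

lemma Dop_deriv:
  assumes d1: "\<And>x. G differentiable (at x)" and d2: "\<And>x. deriv G differentiable (at x)"
  shows "deriv (Dop j G) = Dop (Suc j) (deriv G)"
proof
  fix x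
  have dG: "(G has_real_derivative deriv G x) (at x)"
    using d1 DERIV_deriv_iff_real_differentiable by blast
  have dG': "(deriv G has_real_derivative deriv (deriv G) x) (at x)"
    using d2 DERIV_deriv_iff_real_differentiable by blast
  have "((\<lambda>x. real j * G x + x * deriv G x) has_real_derivative
          real j * deriv G x + (x * deriv (deriv G) x + 1 * deriv G x)) (at x)"
    by (intro DERIV_add DERIV_cmult DERIV_mult' dG dG' DERIV_ident)
  then have "deriv (Dop j G) x = real j * deriv G x + (x * deriv (deriv G) x + 1 * deriv G x)"
    unfolding Dop_def by (rule DERIV_imp_deriv)
  also have "\<dots> = Dop (Suc j) (deriv G) x"
    unfolding Dop_def by (simp add: algebra_simps)
  finally show "deriv (Dop j G) x = Dop (Suc j) (deriv G) x" .
qed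

lemma Dop_derivs:
  assumes "g \<in> Cinf"
  shows "(deriv ^^ k) (Dop j g) = Dop (j + k) ((deriv ^^ k) g)"
  using assms
proof (induction k arbitrary: j g)
  case 0 then show ?case by simp
next
  case (Suc k)
  have "(deriv ^^ Suc k) (Dop j g) = (deriv ^^ k) (deriv (Dop j g))"
    by (simp add: funpow_Suc_right del: funpow.simps)
  also have "deriv (Dop j g) = Dop (Suc j) (deriv g)"
    by (rule Dop_deriv) (use Cinf_differentiable Cinf_deriv Suc.prems in blast)+
  also have "(deriv ^^ k) (Dop (Suc j) (deriv g)) = Dop (Suc j + k) ((deriv ^^ k) (deriv g))"
    by (rule Suc.IH[OF Cinf_deriv[OF Suc.prems]])
  also have "(deriv ^^ k) (deriv g) = (deriv ^^ Suc k) g"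
    by (simp add: funpow_Suc_right del: funpow.simps)
  finally show ?case by simp
qed

lemma Dop_differentiable:
  assumes "G \<in> Cinf"
  shows "Dop m G differentiable (at x)"
  unfolding Dop_def
  by (intro differentiable_add differentiable_mult differentiable_const differentiable_ident
      Cinf_differentiable assms Cinf_deriv)

lemma Dop_Cinf:
  assumes "g \<in> Cinf"
  shows "Dop j g \<in> Cinf"
  unfolding Cinf_iff Dop_derivs[OF assms]
  using Dop_differentiable Cinf_derivs assms by blast

lemma Dop_sn:
  assumes "g \<in> Cinf" "a \<ge> 0"
  shows "seminorm_na n a (Dop j g) \<le> (real j + real n + a) * seminorm_na (Suc n) a g"
proof (rule sn_le[OF assms(2)])
  fix k x assume kx: "k \<le> n" "x \<in> {-a..a}"
  define S where "S = seminorm_na (Suc n) a g"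
  have S0: "S \<ge> 0" unfolding S_def by (rule sn_nonneg[OF assms])
  have b1: "\<bar>(deriv ^^ k) g x\<bar> \<le> S"
    unfolding S_def by (rule sn_ge[OF assms(1)]) (use kx in auto)
  have b2: "\<bar>(deriv ^^ Suc k) g x\<bar> \<le> S"
    unfolding S_def by (rule sn_ge[OF assms(1)]) (use kx in auto)
  have xa: "\<bar>x\<bar> \<le> a" using kx by auto
  have "(deriv ^^ k) (Dop j g) x = Dop (j + k) ((deriv ^^ k) g) x"
    by (simp only: Dop_derivs[OF assms(1)])
  also have "\<dots> = real (j + k) * (deriv ^^ k) g x + x * (deriv ^^ Suc k) g x"
    unfolding Dop_def by simp
  also have "\<bar>\<dots>\<bar> \<le> real (j + k) * \<bar>(deriv ^^ k) g x\<bar> + \<bar>x\<bar> * \<bar>(deriv ^^ Suc k) g x\<bar>"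
    by (simp add: abs_mult abs_triangle_ineq[THEN order_trans])
  also have "\<dots> \<le> real (j + k) * S + a * S"
    by (intro add_mono mult_mono b1 b2 xa) (use S0 assms(2) in auto)
  also have "\<dots> \<le> (real j + real n + a) * S"
    using kx S0 by (simp add: algebra_simps mult_left_mono)
  finally show "\<bar>(deriv ^^ k) (Dop j g) x\<bar> \<le> (real j + real n + a) * seminorm_na (Suc n) a g"
    unfolding S_def .
qed

lemma Dop_diff:
  assumes "f \<in> Cinf" "g \<in> Cinf"
  shows "Dop j (\<lambda>x. f x - g x) = (\<lambda>x. Dop j f x - Dop j g x)"
proof -
  have "deriv (\<lambda>x. f x - g x) = (\<lambda>x. deriv f x - deriv g x)"
    using derivs_diff[OF assms, of 1] by simp
  then show ?thesis unfolding Dop_def by (simp add: algebra_simps)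
qed

lemma Dprod_Cinf: "g \<in> Cinf \<Longrightarrow> Dprod m g \<in> Cinf"
  by (induction m) (auto intro: Dop_Cinf)

lemma Dprod_diff:
  assumes "f \<in> Cinf" "g \<in> Cinf"
  shows "Dprod m (\<lambda>x. f x - g x) = (\<lambda>x. Dprod m f x - Dprod m g x)"
  by (induction m) (simp_all add: Dop_diff Dprod_Cinf assms)

lemma T_Dop:
  assumes "W w" "g \<in> Cinf"
  shows "T w (Dop j g) = Dop j (T w g)"
proof
  fix x
  have gc: "continuous_on UNIV g" by (rule Cinf_cont[OF assms(2)])
  have dc: "continuous_on UNIV (deriv g)" by (rule Cinf_cont[OF Cinf_deriv[OF assms(2)]])
  have "T w (Dop j g) x = integral {0..1} (\<lambda>t. real j * (w t * g (t * x)) + x * ((w t * t) * deriv g (t * x)))"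
    unfolding T_def Dop_def by (simp add: algebra_simps)
  also have "\<dots> = integral {0..1} (\<lambda>t. real j * (w t * g (t * x))) + integral {0..1} (\<lambda>t. x * ((w t * t) * deriv g (t * x)))"
    by (intro integral_add integrable_on_mult_right intT assms(1) gc W_mult_id dc)
  also have "\<dots> = Dop j (T w g) x"
    unfolding Dop_def T_deriv[OF assms(1) Cinf_C1[OF assms(2)]] by (simp add: T_def)
  finally show "T w (Dop j g) x = Dop j (T w g) x" .
qed

lemma T_Dprod:
  assumes "W w" "g \<in> Cinf"
  shows "T w (Dprod m g) = Dprod m (T w g)"
  by (induction m) (simp_all add: T_Dop assms Dprod_Cinf)



definition qw :: "nat \<Rightarrow> real \<Rightarrow> real" where
  "qw m t = (1 - t) ^ m / fact m"

lemma W_qw: "W (qw m)"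
  unfolding W_def qw_def
  by (auto intro!: integrable_continuous_real continuous_intros)

lemma qw_deriv: "(qw (Suc m) has_real_derivative - qw m t) (at t)"
proof -
  have pm: "real m * (1 - t) ^ (m - Suc 0) * (1 - t) = real m * (1 - t) ^ m"
    by (cases m) (auto simp: mult_ac)
  have fm: "fact m > (0::real)" by simp
  show ?thesis
    unfolding qw_def[abs_def]
    by (rule derivative_eq_intros refl | simp)+
qed

lemma qw_key: "qw (Suc m) t * real (Suc m) = (1 - t) * qw m t"
  unfolding qw_def by (simp add: fact_Suc field_simps del: of_nat_Suc)

lemma DERIV_scale_comp:
  assumes "C1 g"
  shows "((\<lambda>t. g (t * x)) has_real_derivative deriv g (t * x) * x) (at t)"
  by (rule DERIV_chain2[OF C1_DERIV[OF assms]]) (auto intro!: derivative_eq_intros)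

lemma Q1:
  assumes "C1 g"
  shows "T (qw 0) (Dop 1 g) x = g x"
proof -
  define F where "F t = t * g (t * x)" for t
  define F' where "F' t = t * (deriv g (t * x) * x) + 1 * g (t * x)" for t
  have "(F has_real_derivative F' t) (at t)" for t
    unfolding F_def F'_def by (intro DERIV_mult' DERIV_ident DERIV_scale_comp assms)
  then have "(F' has_integral (F 1 - F 0)) {0..1}"
    by (intro fundamental_theorem_of_calculus)
       (auto simp: has_real_derivative_iff_has_vector_derivative[symmetric] intro: has_field_derivative_at_within)
  moreover have "F 1 - F 0 = g x" unfolding F_def by simp
  moreover have "qw 0 t * Dop 1 g (t * x) = F' t" for t
    unfolding qw_def Dop_def F'_def by (simp add: algebra_simps)
  ultimately have "((\<lambda>t. qw 0 t * Dop 1 g (t * x)) has_integral g x) {0..1}"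
    by simp
  then show ?thesis unfolding T_def by (rule integral_unique)
qed

lemma Q2:
  assumes "C1 g"
  shows "T (qw (Suc m)) (Dop (Suc (Suc m)) g) x = T (qw m) g x"
proof -
  define F where "F t = qw (Suc m) t * (t * g (t * x))" for t
  define F' where "F' t = qw (Suc m) t * (t * (deriv g (t * x) * x) + 1 * g (t * x)) + - qw m t * (t * g (t * x))" for t
  have "(F has_real_derivative F' t) (at t)" for t
    unfolding F_def F'_def by (intro DERIV_mult' DERIV_ident DERIV_scale_comp assms qw_deriv)
  then have i1: "(F' has_integral (F 1 - F 0)) {0..1}"
    by (intro fundamental_theorem_of_calculus)
       (auto simp: has_real_derivative_iff_has_vector_derivative[symmetric] intro: has_field_derivative_at_within)
  have F10: "F 1 - F 0 = 0" unfolding F_def qw_def by simp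
  have i2: "((\<lambda>t. qw m t * g (t * x)) has_integral T (qw m) g x) {0..1}"
    unfolding T_def by (intro integrable_integral intT W_qw C1_cont assms)
  have eq: "qw (Suc m) t * Dop (Suc (Suc m)) g (t * x) = F' t + qw m t * g (t * x)" for t
  proof -
    have k: "qw (Suc m) t * real (Suc m) = (1 - t) * qw m t" by (rule qw_key)
    have "qw (Suc m) t * Dop (Suc (Suc m)) g (t * x) - (F' t + qw m t * g (t * x))
        = (qw (Suc m) t * real (Suc m) - (1 - t) * qw m t) * g (t * x)"
      unfolding Dop_def F'_def by (simp add: algebra_simps)
    then show ?thesis using k by simp
  qed
  have "((\<lambda>t. qw (Suc m) t * Dop (Suc (Suc m)) g (t * x)) has_integral (0 + T (qw m) g x)) {0..1}"
    unfolding eq using has_integral_add[OF i1 i2] F10 by simp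
  then show ?thesis unfolding T_def by (simp add: integral_unique)
qed

lemma QD:
  assumes "g \<in> Cinf"
  shows "T (qw m) (Dprod (Suc m) g) = g"
proof (induction m)
  case 0
  show ?case using Q1[OF Cinf_C1[OF assms]] by auto
next
  case (Suc m)
  have "T (qw (Suc m)) (Dprod (Suc (Suc m)) g) = T (qw (Suc m)) (Dop (Suc (Suc m)) (Dprod (Suc m) g))"
    by (simp only: Dprod.simps)
  also have "\<dots> = T (qw m) (Dprod (Suc m) g)"
    by (rule ext, rule Q2[OF Cinf_C1[OF Dprod_Cinf[OF assms]]])
  finally show ?case using Suc.IH by simp
qed



definition wc :: "real \<Rightarrow> real \<Rightarrow> real" where
  "wc \<kappa> t = 1 / Gamma \<kappa> * (1 - t) powr (\<kappa> - 1)"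

definition we :: "real \<Rightarrow> real \<Rightarrow> real \<Rightarrow> real" where
  "we \<kappa> \<delta> t = 1 / Gamma \<delta> * ((1 - t) powr (\<delta> - 1) * t powr \<kappa>)"

definition mu :: "(real \<Rightarrow> real) \<Rightarrow> nat \<Rightarrow> real" where
  "mu w m = integral {0..1} (\<lambda>t. w t * t ^ m)"

lemma chi_T: "chi \<kappa> f = T (wc \<kappa>) f"
proof
  fix x
  have "T (wc \<kappa>) f x = integral {0..1} (\<lambda>t. 1 / Gamma \<kappa> * ((1 - t) powr (\<kappa> - 1) * f (t * x)))"
    unfolding T_def wc_def by (simp add: mult.assoc)
  then show "chi \<kappa> f x = T (wc \<kappa>) f x"
    unfolding chi_def by (simp only: integral_mult_right)
qed

lemma EK_T: "\<delta> \<noteq> 0 \<Longrightarrow> EK \<kappa> \<delta> f = T (we \<kappa> \<delta>) f"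
proof
  fix x assume "\<delta> \<noteq> 0"
  have "T (we \<kappa> \<delta>) f x = integral {0..1} (\<lambda>t. 1 / Gamma \<delta> * ((1 - t) powr (\<delta> - 1) * t powr \<kappa> * f (t * x)))"
    unfolding T_def we_def by (simp add: mult.assoc)
  then show "EK \<kappa> \<delta> f x = T (we \<kappa> \<delta>) f x"
    unfolding EK_def using \<open>\<delta> \<noteq> 0\<close> by (simp only: integral_mult_right if_False)
qed

lemma Beta_int:
  fixes a b :: real
  assumes "a > 0" "b > 0"
  shows "((\<lambda>t. t powr (a - 1) * (1 - t) powr (b - 1)) has_integral Beta a b) {0..1}"
  by (rule has_integral_Beta_real[OF assms])

lemma wc_int:
  assumes k: "\<kappa> > 0"
  shows "((\<lambda>t. wc \<kappa> t * t ^ m) has_integral Gamma (real m + 1) / Gamma (\<kappa> + real m + 1)) {0..1}"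
proof -
  have B: "((\<lambda>t. t powr (real m + 1 - 1) * (1 - t) powr (\<kappa> - 1)) has_integral Beta (real m + 1) \<kappa>) {0..1}"
    by (rule Beta_int) (use k in auto)
  have "((\<lambda>t. 1 / Gamma \<kappa> * (t powr (real m + 1 - 1) * (1 - t) powr (\<kappa> - 1))) has_integral
          1 / Gamma \<kappa> * Beta (real m + 1) \<kappa>) {0..1}"
    by (rule has_integral_mult_right[OF B])
  moreover have "1 / Gamma \<kappa> * Beta (real m + 1) \<kappa> = Gamma (real m + 1) / Gamma (\<kappa> + real m + 1)"
    using Gamma_real_pos[OF k] unfolding Beta_def by (simp add: field_simps add_ac)
  ultimately have I: "((\<lambda>t. 1 / Gamma \<kappa> * (t powr (real m + 1 - 1) * (1 - t) powr (\<kappa> - 1))) has_integral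
          Gamma (real m + 1) / Gamma (\<kappa> + real m + 1)) {0..1}" by simp
  show ?thesis
  proof (rule has_integral_spike_finite_eq[of "{0}", THEN iffD1, OF _ _ I])
    fix t :: real assume "t \<in> {0..1} - {0}"
    then have "t > 0" by (auto simp: less_le)
    then show "wc \<kappa> t * t ^ m = 1 / Gamma \<kappa> * (t powr (real m + 1 - 1) * (1 - t) powr (\<kappa> - 1))"
      unfolding wc_def by (simp add: powr_realpow)
  qed auto
qed

lemma we_int:
  assumes k: "\<kappa> > 0" and d: "\<delta> > 0"
  shows "((\<lambda>t. we \<kappa> \<delta> t * t ^ m) has_integral Gamma (\<kappa> + real m + 1) / Gamma (\<kappa> + \<delta> + real m + 1)) {0..1}"
proof -
  have B: "((\<lambda>t. t powr ((\<kappa> + real m + 1) - 1) * (1 - t) powr (\<delta> - 1)) has_integral Beta (\<kappa> + real m + 1) \<delta>) {0..1}"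
    by (rule Beta_int) (use k d in auto)
  have "((\<lambda>t. 1 / Gamma \<delta> * (t powr ((\<kappa> + real m + 1) - 1) * (1 - t) powr (\<delta> - 1))) has_integral
          1 / Gamma \<delta> * Beta (\<kappa> + real m + 1) \<delta>) {0..1}"
    by (rule has_integral_mult_right[OF B])
  moreover have "1 / Gamma \<delta> * Beta (\<kappa> + real m + 1) \<delta> = Gamma (\<kappa> + real m + 1) / Gamma (\<kappa> + \<delta> + real m + 1)"
    using Gamma_real_pos[OF d] unfolding Beta_def by (simp add: field_simps add_ac)
  ultimately have I: "((\<lambda>t. 1 / Gamma \<delta> * (t powr ((\<kappa> + real m + 1) - 1) * (1 - t) powr (\<delta> - 1))) has_integral
          Gamma (\<kappa> + real m + 1) / Gamma (\<kappa> + \<delta> + real m + 1)) {0..1}" by simp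
  show ?thesis
  proof (rule has_integral_spike_finite_eq[of "{0}", THEN iffD1, OF _ _ I])
    fix t :: real assume "t \<in> {0..1} - {0}"
    then have t: "t > 0" by (auto simp: less_le)
    have "t powr ((\<kappa> + real m + 1) - 1) = t powr \<kappa> * t ^ m"
      using t by (simp add: powr_add powr_realpow)
    then show "we \<kappa> \<delta> t * t ^ m = 1 / Gamma \<delta> * (t powr ((\<kappa> + real m + 1) - 1) * (1 - t) powr (\<delta> - 1))"
      unfolding we_def by (simp add: mult_ac)
  qed auto
qed

lemma W_wc: assumes "\<kappa> > 0" shows "W (wc \<kappa>)"
  unfolding W_def
proof
  show "wc \<kappa> integrable_on {0..1}"
    using wc_int[OF assms, of 0] by (simp add: has_integral_integrable)
  show "\<forall>t\<in>{0..1}. 0 \<le> wc \<kappa> t"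
    using Gamma_real_pos[OF assms] unfolding wc_def by auto
qed

lemma W_we: assumes "\<kappa> > 0" "\<delta> > 0" shows "W (we \<kappa> \<delta>)"
  unfolding W_def
proof
  show "we \<kappa> \<delta> integrable_on {0..1}"
    using we_int[OF assms, of 0] by (simp add: has_integral_integrable)
  show "\<forall>t\<in>{0..1}. 0 \<le> we \<kappa> \<delta> t"
    using Gamma_real_pos[OF assms(2)] unfolding we_def by auto
qed

lemma wc_qw:
  assumes "n \<ge> 1" "t \<in> {0..1} - {1}"
  shows "wc (real n) t = qw (n - 1) t"
proof -
  have t: "1 - t > 0" using assms(2) by auto
  have G: "Gamma (real n) = fact (n - 1)"
    using Gamma_fact[of "n - 1"] assms(1) by (simp add: of_nat_diff)
  have "(1 - t) powr (real n - 1) = (1 - t) ^ (n - 1)"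
    using powr_realpow[OF t, of "n - 1"] assms(1) by (simp add: of_nat_diff)
  then show ?thesis unfolding wc_def qw_def G by simp
qed

lemma T_wc_qw:
  assumes "n \<ge> 1"
  shows "T (wc (real n)) f = T (qw (n - 1)) f"
proof
  fix x
  show "T (wc (real n)) f x = T (qw (n - 1)) f x"
    unfolding T_def by (rule integral_spike[of "{1}"]) (use wc_qw[OF assms] in auto)
qed

lemma mu_eq:
  assumes "((\<lambda>t. w t * t ^ m) has_integral c) {0..1}"
  shows "mu w m = c"
  using assms unfolding mu_def by (rule integral_unique)

lemma mu_qw:
  assumes "n \<ge> 1"
  shows "mu (qw (n - 1)) m = Gamma (real m + 1) / Gamma (real n + real m + 1)"
proof -
  have "mu (qw (n - 1)) m = mu (wc (real n)) m"
    unfolding mu_def by (rule integral_spike[of "{1}"]) (use wc_qw[OF assms] in auto)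
  also have "\<dots> = Gamma (real m + 1) / Gamma (real n + real m + 1)"
    by (rule mu_eq[OF wc_int]) (use assms in auto)
  finally show ?thesis .
qed



lemma W_int: "W w \<Longrightarrow> w integrable_on {0..1}"
  unfolding W_def by auto

lemma T_poly:
  assumes "W w"
  shows "T w (\<lambda>y. \<Sum>i\<le>N. a i * y ^ i) = (\<lambda>x. \<Sum>i\<le>N. (a i * mu w i) * x ^ i)"
proof
  fix x
  have "T w (\<lambda>y. \<Sum>i\<le>N. a i * y ^ i) x = integral {0..1} (\<lambda>t. \<Sum>i\<le>N. (a i * x ^ i) * (w t * t ^ i))"
    unfolding T_def by (simp add: sum_distrib_left power_mult_distrib mult_ac)
  also have "\<dots> = (\<Sum>i\<le>N. integral {0..1} (\<lambda>t. (a i * x ^ i) * (w t * t ^ i)))"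
    by (rule integral_sum) (simp, rule integrable_on_mult_right, rule W_int, rule W_mult_pow[OF assms])
  also have "\<dots> = (\<Sum>i\<le>N. (a i * mu w i) * x ^ i)"
    unfolding mu_def integral_mult_right by (simp add: mult_ac)
  finally show "T w (\<lambda>y. \<Sum>i\<le>N. a i * y ^ i) x = (\<Sum>i\<le>N. (a i * mu w i) * x ^ i)" .
qed

lemma poly_cont: "continuous_on UNIV (\<lambda>y::real. \<Sum>i\<le>N. a i * y ^ i)"
  by (intro continuous_on_sum continuous_on_mult continuous_on_const continuous_on_power continuous_on_id)

lemma T_close:
  assumes "W w" "continuous_on UNIV f" "continuous_on UNIV g"
    and "\<And>y. y \<in> {-\<bar>x\<bar>..\<bar>x\<bar>} \<Longrightarrow> \<bar>f y - g y\<bar> \<le> e"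
  shows "\<bar>T w f x - T w g x\<bar> \<le> integral {0..1} w * e"
proof -
  have "T w f x - T w g x = integral {0..1} (\<lambda>t. w t * (f (t * x) - g (t * x)))"
    using fun_cong[OF T_diff[OF assms(1-3)], of x] unfolding T_def by simp
  also have "\<bar>\<dots>\<bar> \<le> integral {0..1} w * e"
  proof (rule boundW[OF assms(1)])
    show "continuous_on {0..1} (\<lambda>t. f (t * x) - g (t * x))"
      by (intro continuous_on_diff cont_scale assms(2,3))
    fix t :: real assume t: "t \<in> {0..1}"
    have "\<bar>t * x\<bar> \<le> \<bar>x\<bar>" using t by (simp add: abs_mult mult_left_le_one_le)
    then have "t * x \<in> {-\<bar>x\<bar>..\<bar>x\<bar>}" by (auto simp: abs_le_iff)
    then show "\<bar>f (t * x) - g (t * x)\<bar> \<le> e" by (rule assms(4))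
  qed
  finally show ?thesis .
qed

lemma T_cont_on: assumes "W w" "continuous_on UNIV g" shows "continuous_on UNIV (T w g)"
  using T_cont[OF assms] by (intro continuous_at_imp_continuous_on) blast

lemma density:
  assumes w1: "W w1" and w2: "W w2" and w3: "W w3"
    and mu: "\<And>m. mu w1 m * mu w2 m = mu w3 m"
    and h: "continuous_on UNIV h"
  shows "T w1 (T w2 h) x = T w3 h x"
proof -
  define I1 where "I1 = integral {0..1} w1"
  define I2 where "I2 = integral {0..1} w2"
  define I3 where "I3 = integral {0..1} w3"
  have I: "I1 \<ge> 0" "I2 \<ge> 0" "I3 \<ge> 0"
    unfolding I1_def I2_def I3_def using integral_W_nonneg w1 w2 w3 by auto
  define C where "C = I1 * I2 + I3 + 1"
  have C: "C > 0" unfolding C_def using I by (simp add: add_nonneg_pos)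
  define D where "D = T w1 (T w2 h) x - T w3 h x"
  have "\<bar>D\<bar> \<le> 0"
  proof (rule field_le_epsilon)
    fix e :: real assume e: "e > 0"
    define \<epsilon> where "\<epsilon> = e / C"
    have eps: "\<epsilon> > 0" unfolding \<epsilon>_def using e C by simp
    obtain p where p: "real_polynomial_function p" "\<And>y. y \<in> {-\<bar>x\<bar>..\<bar>x\<bar>} \<Longrightarrow> \<bar>h y - p y\<bar> < \<epsilon>"
      using Stone_Weierstrass_real_polynomial_function[of "{-\<bar>x\<bar>..\<bar>x\<bar>}" h \<epsilon>]
        continuous_on_subset[OF h] eps by auto
    obtain a N where pa: "p = (\<lambda>y. \<Sum>i\<le>N. a i * y ^ i)"
      using p(1) real_polynomial_function_iff_sum by blast
    have pc: "continuous_on UNIV p" unfolding pa by (rule poly_cont)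
    have Pe: "T w1 (T w2 p) x = T w3 p x"
      unfolding pa T_poly[OF w2] T_poly[OF w1] T_poly[OF w3]
      by (simp add: mu[symmetric] mult_ac)
    have E3: "\<bar>T w3 h x - T w3 p x\<bar> \<le> I3 * \<epsilon>"
      unfolding I3_def by (rule T_close[OF w3 h pc]) (use p(2) in \<open>auto intro: less_imp_le\<close>)
    have E2: "\<bar>T w2 h y - T w2 p y\<bar> \<le> I2 * \<epsilon>" if "y \<in> {-\<bar>x\<bar>..\<bar>x\<bar>}" for y
      unfolding I2_def
    proof (rule T_close[OF w2 h pc])
      fix z assume "z \<in> {-\<bar>y\<bar>..\<bar>y\<bar>}"
      then have "z \<in> {-\<bar>x\<bar>..\<bar>x\<bar>}" using that by auto
      then show "\<bar>h z - p z\<bar> \<le> \<epsilon>" using p(2) less_imp_le by blast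
    qed
    have E1: "\<bar>T w1 (T w2 h) x - T w1 (T w2 p) x\<bar> \<le> I1 * (I2 * \<epsilon>)"
      unfolding I1_def
      by (rule T_close[OF w1 T_cont_on[OF w2 h] T_cont_on[OF w2 pc]]) (use E2 in auto)
    have "D = (T w1 (T w2 h) x - T w1 (T w2 p) x) - (T w3 h x - T w3 p x)"
      unfolding D_def Pe by simp
    then have "\<bar>D\<bar> \<le> I1 * (I2 * \<epsilon>) + I3 * \<epsilon>"
      using E1 E3 by linarith
    also have "\<dots> \<le> C * \<epsilon>"
      unfolding C_def using eps by (simp add: algebra_simps)
    also have "\<dots> = e" unfolding \<epsilon>_def using C by simp
    finally show "\<bar>D\<bar> \<le> 0 + e" by simp
  qed
  then show ?thesis unfolding D_def by simp
qed



definition Sb :: "(real \<Rightarrow> real) set set" where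
  "Sb = {{g \<in> Cinf. seminorm_na n a (\<lambda>x. g x - f x) < e} | f n a e.
            f \<in> Cinf \<and> a > 0 \<and> e > 0}"

lemma Ctop_Sb: "Ctop = subtopology (topology_generated_by Sb) Cinf"
  unfolding Ctop_def Sb_def ..

lemma sn_self: "a \<ge> 0 \<Longrightarrow> seminorm_na n a (\<lambda>x. f x - f x) = 0"
  using sn_zero by simp

lemma Cinf_sub_Sb: "Cinf \<subseteq> \<Union>Sb"
proof
  fix f assume f: "f \<in> Cinf"
  have "{g \<in> Cinf. seminorm_na 0 1 (\<lambda>x. g x - f x) < 1} \<in> Sb"
    unfolding Sb_def mem_Collect_eq using f
    by (intro exI[of _ f] exI[of _ "0::nat"] exI[of _ "1::real"] exI[of _ "1::real"]) auto
  moreover have "f \<in> {g \<in> Cinf. seminorm_na 0 1 (\<lambda>x. g x - f x) < 1}"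
    using f sn_self[of 1 0 f] by simp
  ultimately show "f \<in> \<Union>Sb" by blast
qed

lemma topspace_Ctop: "topspace Ctop = Cinf"
  unfolding Ctop_Sb using Cinf_sub_Sb by auto

lemma ball_open:
  assumes "f0 \<in> Cinf" "a > 0" "e > 0"
  shows "openin Ctop {g \<in> Cinf. seminorm_na n a (\<lambda>x. g x - f0 x) < e}"
proof -
  let ?B = "{g \<in> Cinf. seminorm_na n a (\<lambda>x. g x - f0 x) < e}"
  have "?B \<in> Sb" unfolding Sb_def using assms by blast
  then have "openin (topology_generated_by Sb) ?B" by (rule topology_generated_by_Basis)
  moreover have "?B = ?B \<inter> Cinf" by auto
  ultimately show ?thesis unfolding Ctop_Sb openin_subtopology by blast
qed

lemma cont_lin:
  assumes maps: "\<And>f. f \<in> Cinf \<Longrightarrow> L f \<in> Cinf"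
    and lin: "\<And>f g. f \<in> Cinf \<Longrightarrow> g \<in> Cinf \<Longrightarrow> L (\<lambda>x. f x - g x) = (\<lambda>x. L f x - L g x)"
    and bnd: "\<And>n a. a > 0 \<Longrightarrow> \<exists>N b C. b > 0 \<and> C > 0 \<and> (\<forall>f\<in>Cinf. seminorm_na n a (L f) \<le> C * seminorm_na N b f)"
  shows "continuous_map Ctop Ctop L"
proof -
  have "continuous_map Ctop (topology_generated_by Sb) L"
  proof (rule continuous_on_generated_topo)
    show "L ` topspace Ctop \<subseteq> \<Union>Sb"
      unfolding topspace_Ctop using maps Cinf_sub_Sb by blast
    fix U assume "U \<in> Sb"
    then have "\<exists>f0 n a e. U = {g \<in> Cinf. seminorm_na n a (\<lambda>x. g x - f0 x) < e} \<and> f0 \<in> Cinf \<and> a > 0 \<and> e > 0"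
      unfolding Sb_def mem_Collect_eq by blast
    then obtain f0 n a e where U: "U = {g \<in> Cinf. seminorm_na n a (\<lambda>x. g x - f0 x) < e}"
      and f0: "f0 \<in> Cinf" and a: "a > 0" and e: "e > 0"
      by blast
    have V: "L -` U \<inter> topspace Ctop = {h \<in> Cinf. seminorm_na n a (\<lambda>x. L h x - f0 x) < e}"
      unfolding U topspace_Ctop using maps by auto
    show "openin Ctop (L -` U \<inter> topspace Ctop)"
      unfolding V
    proof (rule openin_subopen[THEN iffD2], rule ballI)
      fix h assume h: "h \<in> {h \<in> Cinf. seminorm_na n a (\<lambda>x. L h x - f0 x) < e}"
      then have hC: "h \<in> Cinf" and hs: "seminorm_na n a (\<lambda>x. L h x - f0 x) < e" by auto
      obtain N b C where b: "b > 0" and C: "C > 0" and NC: "\<forall>f\<in>Cinf. seminorm_na n a (L f) \<le> C * seminorm_na N b f"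
        using bnd[OF a] by blast
      define r where "r = (e - seminorm_na n a (\<lambda>x. L h x - f0 x)) / C"
      have r: "r > 0" unfolding r_def using hs C by simp
      let ?T = "{g \<in> Cinf. seminorm_na N b (\<lambda>x. g x - h x) < r}"
      show "\<exists>T. openin Ctop T \<and> h \<in> T \<and> T \<subseteq> {h \<in> Cinf. seminorm_na n a (\<lambda>x. L h x - f0 x) < e}"
      proof (intro exI conjI)
        show "openin Ctop ?T" by (rule ball_open[OF hC b r])
        show "h \<in> ?T" using hC sn_self[of b N h] b r by simp
        show "?T \<subseteq> {h \<in> Cinf. seminorm_na n a (\<lambda>x. L h x - f0 x) < e}"
        proof
          fix g assume "g \<in> ?T"
          then have gC: "g \<in> Cinf" and gs: "seminorm_na N b (\<lambda>x. g x - h x) < r" by auto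
          have "seminorm_na n a (\<lambda>x. L g x - f0 x)
              \<le> seminorm_na n a (\<lambda>x. L g x - L h x) + seminorm_na n a (\<lambda>x. L h x - f0 x)"
            by (rule sn_tri) (use maps gC hC f0 a in auto)
          also have "(\<lambda>x. L g x - L h x) = L (\<lambda>x. g x - h x)"
            using lin[OF gC hC] by simp
          also have "seminorm_na n a (L (\<lambda>x. g x - h x)) \<le> C * seminorm_na N b (\<lambda>x. g x - h x)"
            using NC Cinf_diff[OF gC hC] by blast
          also have "C * seminorm_na N b (\<lambda>x. g x - h x) < C * r"
            using gs C by simp
          also have "C * r = e - seminorm_na n a (\<lambda>x. L h x - f0 x)"
            unfolding r_def using C by simp
          finally show "g \<in> {h \<in> Cinf. seminorm_na n a (\<lambda>x. L h x - f0 x) < e}"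
            using gC by simp
        qed
      qed
    qed
  qed
  moreover have "L \<in> topspace Ctop \<rightarrow> Cinf" using maps topspace_Ctop by auto
  ultimately have "continuous_map Ctop (subtopology (topology_generated_by Sb) Cinf) L"
    by (simp only: continuous_map_in_subtopology)
  then show ?thesis by (simp only: Ctop_Sb[symmetric])
qed



lemma T_cont_map:
  assumes "W w"
  shows "continuous_map Ctop Ctop (T w)"
proof (rule cont_lin)
  show "T w f \<in> Cinf" if "f \<in> Cinf" for f by (rule T_Cinf[OF assms that])
  show "T w (\<lambda>x. f x - g x) = (\<lambda>x. T w f x - T w g x)" if "f \<in> Cinf" "g \<in> Cinf" for f g
    by (rule T_diff[OF assms Cinf_cont[OF that(1)] Cinf_cont[OF that(2)]])
  fix n :: nat and a :: real assume a: "a > 0"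
  show "\<exists>N b C. b > 0 \<and> C > 0 \<and> (\<forall>f\<in>Cinf. seminorm_na n a (T w f) \<le> C * seminorm_na N b f)"
  proof (intro exI conjI ballI)
    show "a > 0" by (rule a)
    show "integral {0..1} w + 1 > 0" using integral_W_nonneg[OF assms] by simp
    fix f assume f: "f \<in> Cinf"
    have "seminorm_na n a (T w f) \<le> integral {0..1} w * seminorm_na n a f"
      by (rule T_sn[OF assms f]) (use a in simp)
    also have "\<dots> \<le> (integral {0..1} w + 1) * seminorm_na n a f"
      using sn_nonneg[OF f, of a n] a by (simp add: mult_right_mono)
    finally show "seminorm_na n a (T w f) \<le> (integral {0..1} w + 1) * seminorm_na n a f" .
  qed
qed

lemma Dop_cont_map: "continuous_map Ctop Ctop (Dop j)"
proof (rule cont_lin)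
  show "Dop j f \<in> Cinf" if "f \<in> Cinf" for f by (rule Dop_Cinf[OF that])
  show "Dop j (\<lambda>x. f x - g x) = (\<lambda>x. Dop j f x - Dop j g x)" if "f \<in> Cinf" "g \<in> Cinf" for f g
    by (rule Dop_diff[OF that])
  fix n :: nat and a :: real assume a: "a > 0"
  show "\<exists>N b C. b > 0 \<and> C > 0 \<and> (\<forall>f\<in>Cinf. seminorm_na n a (Dop j f) \<le> C * seminorm_na N b f)"
  proof (intro exI conjI ballI)
    show "a > 0" by (rule a)
    show "real j + real n + a > 0" using a by simp
    fix f assume f: "f \<in> Cinf"
    show "seminorm_na n a (Dop j f) \<le> (real j + real n + a) * seminorm_na (Suc n) a f"
      by (rule Dop_sn[OF f]) (use a in simp)
  qed
qed

lemma Dprod_cont_map: "continuous_map Ctop Ctop (Dprod m)"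
proof (induction m)
  case 0
  have "Dprod 0 = (\<lambda>g. g)" by (rule ext) simp
  then show ?case by (simp add: continuous_map_id[unfolded id_def])
next
  case (Suc m)
  have eq: "Dprod (Suc m) = Dop (Suc m) \<circ> Dprod m" by (rule ext) simp
  show ?case unfolding eq by (rule continuous_map_compose[OF Suc.IH Dop_cont_map])
qed

theorem main:
  fixes \<kappa> :: real and n :: nat
  assumes "\<kappa> > 0" and "n = nat \<lceil>\<kappa>\<rceil>"
  shows "(\<forall>f \<in> Cinf. \<forall>g \<in> Cinf. \<forall>c :: real.
            chi \<kappa> (\<lambda>x. f x + g x) = (\<lambda>x. chi \<kappa> f x + chi \<kappa> g x) \<and>
            chi \<kappa> (\<lambda>x. c * f x) = (\<lambda>x. c * chi \<kappa> f x))
       \<and> homeomorphic_map Ctop Ctop (chi \<kappa>)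
       \<and> (\<forall>f \<in> Cinf. inv_into Cinf (chi \<kappa>) f = Dprod n (EK \<kappa> (real n - \<kappa>) f))"
proof -
  have k: "\<kappa> > 0" by (rule assms(1))
  define \<delta> where "\<delta> = real n - \<kappa>"
  have c0: "\<lceil>\<kappa>\<rceil> \<ge> 0" using k by simp
  have e1: "real (nat \<lceil>\<kappa>\<rceil>) = real_of_int \<lceil>\<kappa>\<rceil>" by (rule of_nat_nat[OF c0])
  have e2: "\<kappa> \<le> real_of_int \<lceil>\<kappa>\<rceil>" by (rule le_of_int_ceiling)
  have nk: "real n \<ge> \<kappa>" using assms(2) e1 e2 by simp
  have d0: "\<delta> \<ge> 0" unfolding \<delta>_def using nk by simp
  have n1: "n \<ge> 1" using assms nk by linarith
  have nd: "real n = \<kappa> + \<delta>" unfolding \<delta>_def by simp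
  define q where "q = qw (n - 1)"
  have Wq: "W q" unfolding q_def by (rule W_qw)
  have Wc: "W (wc \<kappa>)" by (rule W_wc[OF k])
  define E where "E = EK \<kappa> \<delta>"
  have E_cases: "(\<delta> = 0 \<and> E = (\<lambda>f. f)) \<or> (\<delta> > 0 \<and> E = T (we \<kappa> \<delta>))"
  proof (cases "\<delta> = 0")
    case True
    then show ?thesis unfolding E_def EK_def[abs_def] by simp
  next
    case False
    then have "\<delta> > 0" using d0 by simp
    moreover have "E = T (we \<kappa> \<delta>)" unfolding E_def using False by (intro ext EK_T)
    ultimately show ?thesis by simp
  qed
  have chiT: "chi \<kappa> = T (wc \<kappa>)" by (intro ext chi_T)
  have E_Cinf: "E f \<in> Cinf" if "f \<in> Cinf" for f
    using E_cases that T_Cinf W_we[OF k] by auto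
  have E_cont: "continuous_map Ctop Ctop E"
    using E_cases T_cont_map[OF W_we[OF k]] continuous_map_id[unfolded id_def] by auto
  have chi_Cinf: "chi \<kappa> f \<in> Cinf" if "f \<in> Cinf" for f
    unfolding chiT by (rule T_Cinf[OF Wc that])
  have comp: "chi \<kappa> (E f) = T q f \<and> E (chi \<kappa> f) = T q f" if f: "f \<in> Cinf" for f
    using E_cases
  proof
    assume "\<delta> = 0 \<and> E = (\<lambda>f. f)"
    then have "\<kappa> = real n" and E: "E = (\<lambda>f. f)" using nd by auto
    then have "chi \<kappa> f = T q f" unfolding chiT q_def using T_wc_qw[OF n1] by simp
    then show ?thesis using E by simp
  next
    assume "\<delta> > 0 \<and> E = T (we \<kappa> \<delta>)"
    then have d: "\<delta> > 0" and E: "E = T (we \<kappa> \<delta>)" by auto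
    have We: "W (we \<kappa> \<delta>)" by (rule W_we[OF k d])
    have mu_prod: "mu (wc \<kappa>) m * mu (we \<kappa> \<delta>) m = mu q m" for m
    proof -
      have "mu (wc \<kappa>) m = Gamma (real m + 1) / Gamma (\<kappa> + real m + 1)"
        by (rule mu_eq[OF wc_int[OF k]])
      moreover have "mu (we \<kappa> \<delta>) m = Gamma (\<kappa> + real m + 1) / Gamma (\<kappa> + \<delta> + real m + 1)"
        by (rule mu_eq[OF we_int[OF k d]])
      moreover have "mu q m = Gamma (real m + 1) / Gamma (real n + real m + 1)"
        unfolding q_def by (rule mu_qw[OF n1])
      moreover have "Gamma (\<kappa> + real m + 1) > 0" using k by (intro Gamma_real_pos) simp
      ultimately show ?thesis using nd by (simp add: add_ac)
    qed
    have fc: "continuous_on UNIV f" by (rule Cinf_cont[OF f])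
    have "T (wc \<kappa>) (T (we \<kappa> \<delta>) f) = T q f"
      by (rule ext, rule density[OF Wc We Wq mu_prod fc])
    moreover have "T (we \<kappa> \<delta>) (T (wc \<kappa>) f) = T q f"
      by (rule ext, rule density[OF We Wc Wq _ fc]) (simp add: mu_prod[symmetric] mult.commute)
    ultimately show ?thesis unfolding chiT E by simp
  qed
  define ginv where "ginv f = Dprod n (E f)" for f
  have nS: "n = Suc (n - 1)" using n1 by simp
  have QDn: "T q (Dprod n g) = g" if "g \<in> Cinf" for g
    unfolding q_def by (subst nS, rule QD[OF that])
  have left: "ginv (chi \<kappa> f) = f" if f: "f \<in> Cinf" for f
  proof -
    have "ginv (chi \<kappa> f) = Dprod n (T q f)" unfolding ginv_def using comp[OF f] by simp
    also have "\<dots> = T q (Dprod n f)" by (rule T_Dprod[OF Wq f, symmetric])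
    also have "\<dots> = f" by (rule QDn[OF f])
    finally show ?thesis .
  qed
  have right: "chi \<kappa> (ginv f) = f" if f: "f \<in> Cinf" for f
  proof -
    have "chi \<kappa> (ginv f) = T (wc \<kappa>) (Dprod n (E f))" unfolding ginv_def chiT ..
    also have "\<dots> = Dprod n (T (wc \<kappa>) (E f))" by (rule T_Dprod[OF Wc E_Cinf[OF f]])
    also have "T (wc \<kappa>) (E f) = T q f" using comp[OF f] unfolding chiT by simp
    also have "Dprod n (T q f) = T q (Dprod n f)" by (rule T_Dprod[OF Wq f, symmetric])
    also have "\<dots> = f" by (rule QDn[OF f])
    finally show ?thesis .
  qed
  have ginv_cont: "continuous_map Ctop Ctop ginv"
  proof -
    have "ginv = Dprod n \<circ> E" unfolding ginv_def[abs_def] by (simp add: o_def)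
    then show ?thesis using continuous_map_compose[OF E_cont Dprod_cont_map] by simp
  qed
  have chi_cont: "continuous_map Ctop Ctop (chi \<kappa>)"
    unfolding chiT by (rule T_cont_map[OF Wc])
  have homeo: "homeomorphic_map Ctop Ctop (chi \<kappa>)"
  proof (rule homeomorphic_maps_imp_map[of _ _ _ ginv])
    show "homeomorphic_maps Ctop Ctop (chi \<kappa>) ginv"
      unfolding homeomorphic_maps_def topspace_Ctop using chi_cont ginv_cont left right by blast
  qed
  have inj: "inj_on (chi \<kappa>) Cinf" by (rule inj_on_inverseI[of _ ginv]) (rule left)
  have inv: "inv_into Cinf (chi \<kappa>) f = Dprod n (EK \<kappa> (real n - \<kappa>) f)" if f: "f \<in> Cinf" for f
  proof -
    have "inv_into Cinf (chi \<kappa>) f = ginv f"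
      by (rule inv_into_f_eq[OF inj]) (use f right ginv_def Dprod_Cinf E_Cinf in auto)
    then show ?thesis unfolding ginv_def E_def \<delta>_def .
  qed
  have lin: "chi \<kappa> (\<lambda>x. f x + g x) = (\<lambda>x. chi \<kappa> f x + chi \<kappa> g x) \<and>
            chi \<kappa> (\<lambda>x. c * f x) = (\<lambda>x. c * chi \<kappa> f x)" if "f \<in> Cinf" "g \<in> Cinf" for f g c
    unfolding chiT using T_add[OF Wc Cinf_cont[OF that(1)] Cinf_cont[OF that(2)]] T_cmult by simp
  show ?thesis using lin homeo inv by blast
qed


theorem theorem5p3:
  fixes \<kappa> :: real and n :: nat
  assumes "\<kappa> > 0" and "n = nat \<lceil>\<kappa>\<rceil>"
  shows "(\<forall>f \<in> Cinf. \<forall>g \<in> Cinf. \<forall>c :: real.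
            chi \<kappa> (\<lambda>x. f x + g x) = (\<lambda>x. chi \<kappa> f x + chi \<kappa> g x) \<and>
            chi \<kappa> (\<lambda>x. c * f x) = (\<lambda>x. c * chi \<kappa> f x))
       \<and> homeomorphic_map Ctop Ctop (chi \<kappa>)
       \<and> (\<forall>f \<in> Cinf. inv_into Cinf (chi \<kappa>) f = Dprod n (EK \<kappa> (real n - \<kappa>) f))"
  by (rule main[OF assms])

end
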